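(* Let $K$ be a field and $n\ge 2$. If $\{\alpha_i\in\mathbb{M}(K^n) : 1\le i\le m\}$ is a collection of M-flags in general position with $m\ge 2n-1$, then no $\alpha\in\mathbb{M}(K^n)$ touches all of the M-flags $\alpha_1,\dots,\alpha_m$ simultaneously.
   Context: An M-flag in $\mathbb{P}(K^n)$ is a pair $\alpha=(\overline{H}^{+},\overline{v}^{-})$ where $\overline{H}^{+}\subset\mathbb{P}(K^n)$ is a projective hyperplane and $\overline{v}^{-}\in\overline{H}^{+}$ is a point; $\mathbb{M}(K^n)$ denotes the set of all M-flags. Two M-flags $\alpha_1=(\overline{H}^+_1,\overline{v}^-_1)$, $\alpha_2=(\overline{H}^+_2,\overline{v}^-_2)$ touch each other if $\overline{v}^-_1\in\overline{H}^+_2$ or $\overline{v}^-_2\in\overline{H}^+_1$. A collection $\{\alpha_i=(\overline{H}^+_i,\overline{v}^-_i) : i\in I\}$ is in general position if for every $J\subset I$ with $|J|=n$: (a) $\bigcap_{j\in J}\overline{H}^+_j=\emptyset$, and (b) the points $\overline{v}^-_j$, $j\in J$, span all of $\mathbb{P}(K^n)$ (i.e. the corresponding vectors span $K^n$). *)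

theory Defs
  imports Main
begin

text \<open>Vectors of K^n are functions 'n \<Rightarrow> 'a, with 'n a finite index type of
  cardinality n and 'a a field K. A projective point is represented by a nonzero
  vector v; a projective hyperplane by a nonzero linear functional f, given by its
  coefficient vector, with hyperplane {[x]. f . x = 0}. All notions below are
  invariant under rescaling of representatives.\<close>

type_synonym ('a, 'n) kvec = "'n \<Rightarrow> 'a"
type_synonym ('a, 'n) mflag = "('a, 'n) kvec \<times> ('a, 'n) kvec"

definition pair :: "('a::field, 'n::finite) kvec \<Rightarrow> ('a, 'n) kvec \<Rightarrow> 'a" where
  "pair f x = (\<Sum>k\<in>UNIV. f k * x k)"

text \<open>An M-flag (H^+, v^-): H^+ given by nonzero functional f, v^- by nonzero
  vector v, with v^- lying on H^+.\<close>
definition is_mflag :: "('a::field, 'n::finite) mflag \<Rightarrow> bool" where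
  "is_mflag \<alpha> \<longleftrightarrow> fst \<alpha> \<noteq> (\<lambda>_. 0) \<and> snd \<alpha> \<noteq> (\<lambda>_. 0) \<and> pair (fst \<alpha>) (snd \<alpha>) = 0"

definition touches :: "('a::field, 'n::finite) mflag \<Rightarrow> ('a, 'n) mflag \<Rightarrow> bool" where
  "touches \<alpha>1 \<alpha>2 \<longleftrightarrow> pair (fst \<alpha>2) (snd \<alpha>1) = 0 \<or> pair (fst \<alpha>1) (snd \<alpha>2) = 0"

text \<open>General position of a family indexed by I: for every J \<subseteq> I with |J| = n,
  (a) the projective hyperplanes have empty intersection, i.e. no nonzero vector
  lies in all kernels; (b) the vectors v_j span K^n.\<close>
definition general_position :: "'i set \<Rightarrow> ('i \<Rightarrow> ('a::field, 'n::finite) mflag) \<Rightarrow> bool" where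
  "general_position I \<alpha> \<longleftrightarrow>
     (\<forall>J. J \<subseteq> I \<and> finite J \<and> card J = card (UNIV :: 'n set) \<longrightarrow>
        \<not> (\<exists>x::('a,'n) kvec. x \<noteq> (\<lambda>_. 0) \<and> (\<forall>j\<in>J. pair (fst (\<alpha> j)) x = 0)) \<and>
        (\<forall>w::('a,'n) kvec. \<exists>c::'i \<Rightarrow> 'a. w = (\<lambda>k. \<Sum>j\<in>J. c j * snd (\<alpha> j) k)))"

end

theory Submission
  imports Defs
begin

lemma pair_lin:
  fixes f :: "('a::field, 'n::finite) kvec"
  assumes "finite J"
  shows "pair f (\<lambda>k. \<Sum>j\<in>J. c j * v j k) = (\<Sum>j\<in>J. c j * pair f (v j))"
proof -
  have "pair f (\<lambda>k. \<Sum>j\<in>J. c j * v j k) = (\<Sum>k\<in>UNIV. \<Sum>j\<in>J. f k * (c j * v j k))"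
    unfolding pair_def by (simp add: sum_distrib_left)
  also have "\<dots> = (\<Sum>j\<in>J. \<Sum>k\<in>UNIV. c j * (f k * v j k))"
    by (subst sum.swap) (simp add: algebra_simps)
  also have "\<dots> = (\<Sum>j\<in>J. c j * pair f (v j))"
    unfolding pair_def by (simp add: sum_distrib_left)
  finally show ?thesis .
qed

lemma pair_zero_all:
  fixes f :: "('a::field, 'n::finite) kvec"
  assumes "\<forall>w. pair f w = 0"
  shows "f = (\<lambda>_. 0)"
proof
  fix k
  have "pair f (\<lambda>i. if i = k then 1 else 0) = f k"
    unfolding pair_def by (simp add: if_distrib cong: if_cong)
  then show "f k = 0" using assms by simp
qed

theorem mainTheorem7:
  fixes \<alpha> :: "nat \<Rightarrow> ('a::field, 'n::finite) mflag" and m :: nat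
  assumes "card (UNIV :: 'n set) \<ge> 2"
    and "\<forall>i\<in>{1..m}. is_mflag (\<alpha> i)"
    and "general_position {1..m} \<alpha>"
    and "m \<ge> 2 * card (UNIV :: 'n set) - 1"
  shows "\<not> (\<exists>\<beta>::('a, 'n) mflag. is_mflag \<beta> \<and> (\<forall>i\<in>{1..m}. touches \<beta> (\<alpha> i)))"
proof
  assume "\<exists>\<beta>::('a, 'n) mflag. is_mflag \<beta> \<and> (\<forall>i\<in>{1..m}. touches \<beta> (\<alpha> i))"
  then obtain f v where fv: "f \<noteq> (\<lambda>_. 0)" "v \<noteq> (\<lambda>_. 0)"
     and t: "\<forall>i\<in>{1..m}. pair (fst (\<alpha> i)) v = 0 \<or> pair f (snd (\<alpha> i)) = 0"
    unfolding is_mflag_def touches_def by fastforce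
  define n where "n = card (UNIV :: 'n set)"
  define A where "A = {i\<in>{1..m}. pair (fst (\<alpha> i)) v = 0}"
  define B where "B = {i\<in>{1..m}. pair f (snd (\<alpha> i)) = 0}"
  have fA: "finite A" and fB: "finite B" unfolding A_def B_def by auto
  have "A \<union> B = {1..m}" using t unfolding A_def B_def by auto
  hence "m \<le> card A + card B" using card_Un_le[of A B] by simp
  hence "n \<le> card A \<or> n \<le> card B" using assms(4) unfolding n_def by linarith
  thus False
  proof
    assume "n \<le> card A"
    then obtain J where J: "J \<subseteq> A" "card J = n" using obtain_subset_with_card_n by metis
    have "finite J" using J fA finite_subset by blast
    moreover have "J \<subseteq> {1..m}" using J unfolding A_def by auto
    ultimately have "\<not> (\<exists>x::('a,'n) kvec. x \<noteq> (\<lambda>_. 0) \<and> (\<forall>j\<in>J. pair (fst (\<alpha> j)) x = 0))"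
      using assms(3) J unfolding general_position_def n_def by blast
    moreover have "\<forall>j\<in>J. pair (fst (\<alpha> j)) v = 0" using J unfolding A_def by auto
    ultimately show False using fv by blast
  next
    assume "n \<le> card B"
    then obtain J where J: "J \<subseteq> B" "card J = n" using obtain_subset_with_card_n by metis
    have fJ: "finite J" using J fB finite_subset by blast
    moreover have "J \<subseteq> {1..m}" using J unfolding B_def by auto
    ultimately have sp: "\<forall>w::('a,'n) kvec. \<exists>c::nat \<Rightarrow> 'a. w = (\<lambda>k. \<Sum>j\<in>J. c j * snd (\<alpha> j) k)"
      using assms(3) J unfolding general_position_def n_def by blast
    have z: "\<forall>j\<in>J. pair f (snd (\<alpha> j)) = 0" using J unfolding B_def by auto
    have "\<forall>w. pair f w = 0"
    proof
      fix w :: "('a,'n) kvec"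
      obtain c where "w = (\<lambda>k. \<Sum>j\<in>J. c j * snd (\<alpha> j) k)" using sp by blast
      hence "pair f w = (\<Sum>j\<in>J. c j * pair f (snd (\<alpha> j)))" using pair_lin[OF fJ] by simp
      thus "pair f w = 0" using z by simp
    qed
    thus False using pair_zero_all fv by blast
  qed
qed

end
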